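(* Let $\Lambda$ be an integral lattice of signature $(2,b)$ with $b\ge3$ and $\tilde{\mathrm{O}}^+(\Lambda)$ the kernel of $\mathrm{O}^+(\Lambda)\to\mathrm{O}(\Lambda^\vee/\Lambda)$. Then for every $k$, $M_k(\tilde{\mathrm{O}}^+(\Lambda),\det)^{(1)}=M_k(\tilde{\mathrm{O}}^+(\Lambda),\det)$, i.e. every modular form of weight $k$ and character $\det$ for $\tilde{\mathrm{O}}^+(\Lambda)$ vanishes along every irreducible component of the $(-2)$-Heegner divisor.
   Context: $\mathcal{D}$ is one of the two connected components of $\{[\omega]\in\mathbb{P}(\Lambda\otimes\mathbb{C}):(\omega,\omega)=0,(\omega,\bar\omega)>0\}$ and $\mathrm{O}^+(\Lambda)$ the subgroup of $\mathrm{O}(\Lambda)$ preserving $\mathcal{D}$. $\lambda=\mathcal{O}(-1)|_{\mathcal{D}}$. $M_k(\Gamma,\chi)$ is the space of $\Gamma$-invariant holomorphic sections of $\lambda^{\otimes k}\otimes\chi$ on $\mathcal{D}$. The $(-2)$-Heegner divisor is $\mathcal{H}=\bigcup_{\delta\in\Lambda,(\delta,\delta)=-2}\delta^\perp\cap\mathcal{D}$, and $M_k(\Gamma,\chi)^{(m)}$ is the subspace of forms vanishing to order $\ge m$ along every irreducible component of $\mathcal{H}$. *)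

theory Defs
  imports "HOL-Analysis.Analysis"
begin

text \<open>The lattice is \<open>\<int>^'n\<close> with integral symmetric Gram matrix \<open>G\<close>.\<close>

definition bilin :: "'a::comm_ring_1 ^'n ^'n \<Rightarrow> 'a ^'n \<Rightarrow> 'a ^'n \<Rightarrow> 'a" where
  "bilin G x y = (\<Sum>i\<in>UNIV. \<Sum>j\<in>UNIV. x$i * G$i$j * y$j)"

definition cmat :: "int ^'n ^'m \<Rightarrow> complex ^'n ^'m" where
  "cmat g = (\<chi> i j. of_int (g$i$j))"

definition rmat :: "int ^'n ^'m \<Rightarrow> real ^'n ^'m" where
  "rmat g = (\<chi> i j. of_int (g$i$j))"

definition cvec :: "int ^'n \<Rightarrow> complex ^'n" where
  "cvec v = (\<chi> i. of_int (v$i))"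

definition qvec :: "int ^'n \<Rightarrow> rat ^'n" where
  "qvec v = (\<chi> i. of_int (v$i))"

definition qmat :: "int ^'n ^'m \<Rightarrow> rat ^'n ^'m" where
  "qmat g = (\<chi> i j. of_int (g$i$j))"

definition cconj :: "complex ^'n \<Rightarrow> complex ^'n" where
  "cconj w = (\<chi> i. cnj (w$i))"

definition posdef_on :: "int ^'n ^'n \<Rightarrow> (real ^'n) set \<Rightarrow> bool" where
  "posdef_on G V \<longleftrightarrow> (\<forall>v\<in>V. v \<noteq> 0 \<longrightarrow> bilin (rmat G) v v > 0)"

definition signature_2_b :: "int ^'n ^'n \<Rightarrow> nat \<Rightarrow> bool" where
  "signature_2_b G b \<longleftrightarrow> transpose G = G \<and> det (rmat G) \<noteq> 0 \<and> CARD('n) = b + 2 \<and>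
     (\<exists>V. subspace V \<and> dim V = 2 \<and> posdef_on G V) \<and>
     \<not> (\<exists>V. subspace V \<and> dim V = 3 \<and> posdef_on G V)"

text \<open>Affine cone over the period domain (both components).\<close>
definition period_cone :: "int ^'n ^'n \<Rightarrow> (complex ^'n) set" where
  "period_cone G = {w. bilin (cmat G) w w = 0 \<and> Re (bilin (cmat G) w (cconj w)) > 0}"

definition orth_group :: "int ^'n ^'n \<Rightarrow> (int ^'n ^'n) set" where
  "orth_group G = {g. transpose g ** G ** g = G \<and> (det g = 1 \<or> det g = -1)}"

definition orth_plus :: "int ^'n ^'n \<Rightarrow> (complex ^'n) set \<Rightarrow> (int ^'n ^'n) set" where
  "orth_plus G D = {g \<in> orth_group G. (\<lambda>w. cmat g *v w) ` D = D}"

definition dual_lattice :: "int ^'n ^'n \<Rightarrow> (rat ^'n) set" where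
  "dual_lattice G = {x. \<exists>v. qmat G *v x = qvec v}"

definition disc_kernel :: "int ^'n ^'n \<Rightarrow> (complex ^'n) set \<Rightarrow> (int ^'n ^'n) set" where
  "disc_kernel G D = {g \<in> orth_plus G D.
      \<forall>x\<in>dual_lattice G. \<exists>v. qmat g *v x - x = qvec v}"

definition holo_several :: "(complex ^'n \<Rightarrow> complex) \<Rightarrow> (complex ^'n) set \<Rightarrow> bool" where
  "holo_several f U \<longleftrightarrow> (\<forall>x\<in>U. \<exists>L. (f has_derivative L) (at x) \<and>
        (\<forall>c v. L (c *s v) = c * L v))"

text \<open>Modular forms of weight k and character chi for Gamma, as homogeneous functions
 on the affine cone D over the period domain, holomorphic on that complex submanifold.\<close>
definition modular_form ::
  "int ^'n ^'n \<Rightarrow> (complex ^'n) set \<Rightarrow> (int ^'n ^'n) set \<Rightarrow> (int ^'n ^'n \<Rightarrow> complex)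
     \<Rightarrow> int \<Rightarrow> (complex ^'n \<Rightarrow> complex) \<Rightarrow> bool" where
  "modular_form G D \<Gamma> chr k F \<longleftrightarrow>
     (\<forall>w\<in>D. \<exists>U f. open U \<and> w \<in> U \<and> holo_several f U \<and> (\<forall>x\<in>U \<inter> D. F x = f x)) \<and>
     (\<forall>w\<in>D. \<forall>t. t \<noteq> 0 \<longrightarrow> F (t *s w) = t powi (- k) * F w) \<and>
     (\<forall>g\<in>\<Gamma>. \<forall>w\<in>D. F (cmat g *v w) = chr g * F w)"

definition vanishes_on_heegner_m2 :: "int ^'n ^'n \<Rightarrow> (complex ^'n) set \<Rightarrow> (complex ^'n \<Rightarrow> complex) \<Rightarrow> bool" where
  "vanishes_on_heegner_m2 G D F \<longleftrightarrow>
     (\<forall>\<delta>. bilin G \<delta> \<delta> = -2 \<longrightarrow> (\<forall>w\<in>D. bilin (cmat G) (cvec \<delta>) w = 0 \<longrightarrow> F w = 0))"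

end

theory Submission imports Defs begin

lemma det_base:
  fixes v :: "'a::comm_ring_1^'n"
  shows "det ((\<chi> i. if i = k then v else axis i 1) :: 'a^'n^'n) = v$k"
proof -
  have v: "v = (\<Sum>j\<in>UNIV. v$j *s axis j 1)"
    by (simp add: vec_eq_iff sum_component axis_def if_distrib cong: if_cong)
  have "det ((\<chi> i. if i = k then v else axis i 1) :: 'a^'n^'n)
     = (\<Sum>j\<in>UNIV. det ((\<chi> i. if i = k then v$j *s axis j 1 else axis i 1) :: 'a^'n^'n))"
    by (subst v, rule det_linear_row_sum) simp
  also have "\<dots> = (\<Sum>j\<in>UNIV. v$j * det ((\<chi> i. if i = k then axis j 1 else axis i 1) :: 'a^'n^'n))"
    by (simp add: det_row_mul)
  also have "\<dots> = (\<Sum>j\<in>UNIV. if j = k then v$j else 0)"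
  proof (rule sum.cong)
    fix j assume "j \<in> (UNIV::'n set)"
    show "v$j * det ((\<chi> i. if i = k then axis j 1 else axis i 1) :: 'a^'n^'n) = (if j = k then v$j else 0)"
    proof (cases "j = k")
      case True
      have "((\<chi> i. if i = k then axis j 1 else axis i 1) :: 'a^'n^'n) = mat 1"
        using True by (simp add: vec_eq_iff mat_def axis_def)
      then show ?thesis using True by simp
    next
      case False
      have "det ((\<chi> i. if i = k then axis j 1 else axis i 1) :: 'a^'n^'n) = 0"
        by (rule det_identical_rows[of k j]) (use False in \<open>auto simp: row_def vec_eq_iff\<close>)
      then show ?thesis using False by simp
    qed
  qed simp
  also have "\<dots> = v$k" by simp
  finally show ?thesis .
qed

lemma det_l2:
  fixes v u :: "'a::comm_ring_1^'n"
  assumes "finite S" "k \<notin> S"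
  shows "det ((\<chi> i. if i = k then v else if i \<in> S then axis i 1 + u$i *s v else axis i 1) :: 'a^'n^'n) = v$k"
  using assms
proof (induction S rule: finite_induct)
  case empty
  show ?case by (simp only: empty_iff if_False det_base)
next
  case (insert j S)
  let ?A = "(\<chi> i. if i = k then v else if i \<in> insert j S then axis i 1 + u$i *s v else axis i 1) :: 'a^'n^'n"
  have jk: "j \<noteq> k" using insert by auto
  have "det ?A = det (\<chi> l. if l = j then row j ?A + (- u$j) *s row k ?A else row l ?A)"
    by (rule det_row_operation[symmetric]) (rule jk)
  also have "(\<chi> l. if l = j then row j ?A + (- u$j) *s row k ?A else row l ?A) =
     (\<chi> i. if i = k then v else if i \<in> S then axis i 1 + u$i *s v else axis i 1)"
    using jk insert.hyps by (auto simp: vec_eq_iff row_def)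
  finally show ?case using insert by simp
qed

lemma det_l1:
  fixes v u :: "'a::comm_ring_1^'n"
  assumes "finite S"
  shows "det ((\<chi> i. if i \<in> S then axis i 1 + u$i *s v else axis i 1) :: 'a^'n^'n) = 1 + (\<Sum>i\<in>S. u$i * v$i)"
  using assms
proof (induction S rule: finite_induct)
  case empty
  have "((\<chi> i. axis i 1) :: 'a^'n^'n) = mat 1" by (simp add: vec_eq_iff mat_def axis_def)
  then show ?case by simp
next
  case (insert k S)
  let ?c = "\<lambda>i. if i \<in> S then axis i 1 + u$i *s v else axis i 1"
  have eq: "((\<chi> i. if i \<in> insert k S then axis i 1 + u$i *s v else axis i 1) :: 'a^'n^'n)
     = (\<chi> i. if i = k then axis i 1 + u$k *s v else ?c i)"
    by (auto simp: vec_eq_iff)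
  have e2: "((\<chi> i. if i = k then axis i 1 else ?c i) :: 'a^'n^'n) = (\<chi> i. ?c i)"
    using insert.hyps by (auto simp: vec_eq_iff)
  have e3: "((\<chi> i. if i = k then v else ?c i) :: 'a^'n^'n) = (\<chi> i. if i = k then v else if i \<in> S then axis i 1 + u$i *s v else axis i 1)"
    by (auto simp: vec_eq_iff)
  have "det ((\<chi> i. if i = k then axis i 1 + u$k *s v else ?c i) :: 'a^'n^'n)
     = det ((\<chi> i. if i = k then axis i 1 else ?c i) :: 'a^'n^'n) + det ((\<chi> i. if i = k then u$k *s v else ?c i) :: 'a^'n^'n)"
    by (rule det_row_add)
  also have "det ((\<chi> i. if i = k then u$k *s v else ?c i) :: 'a^'n^'n) = u$k * det ((\<chi> i. if i = k then v else ?c i) :: 'a^'n^'n)"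
    by (rule det_row_mul)
  also have "det ((\<chi> i. if i = k then v else ?c i) :: 'a^'n^'n) = v$k"
    by (rule det_l2[OF insert.hyps])
  also note e2
  also note insert.IH
  finally show ?case
    unfolding eq using insert.hyps by (simp add: algebra_simps)
qed

definition refl_mat :: "'a::comm_ring_1^'n^'n \<Rightarrow> 'a^'n \<Rightarrow> 'a^'n^'n" where
  "refl_mat M d = (\<chi> i j. (if i = j then 1 else 0) + d$i * (d v* M)$j)"

lemma bilin_add_left: "bilin M (x + y) z = bilin M x z + bilin M y z"
  by (simp add: bilin_def algebra_simps sum.distrib)
lemma bilin_add_right: "bilin M z (x + y) = bilin M z x + bilin M z y"
  by (simp add: bilin_def algebra_simps sum.distrib)
lemma bilin_scale_left: "bilin M (c *s x) y = c * bilin M x y"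
  by (simp add: bilin_def sum_distrib_left algebra_simps)
lemma bilin_scale_right: "bilin M x (c *s y) = c * bilin M x y"
  by (simp add: bilin_def sum_distrib_left algebra_simps)
lemma bilin_sym:
  assumes "transpose M = M"
  shows "bilin M x y = bilin M y x"
proof -
  have e: "M$i$j = M$j$i" for i j proof -
    have "transpose M $ j $ i = M $ j $ i" using assms by simp
    then show ?thesis by (simp add: transpose_def)
  qed
  show ?thesis unfolding bilin_def
    by (subst sum.swap) (simp add: e algebra_simps)
qed

lemma bilin_mv: "bilin M a x = (\<Sum>i\<in>UNIV. a$i * (M *v x)$i)"
  by (simp add: bilin_def matrix_vector_mult_def sum_distrib_left algebra_simps)

lemma bilin_vm: "bilin M a x = (\<Sum>j\<in>UNIV. (a v* M)$j * x$j)"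
proof -
  have "bilin M a x = (\<Sum>j\<in>UNIV. \<Sum>i\<in>UNIV. a$i * M$i$j * x$j)"
    unfolding bilin_def by (rule sum.swap)
  also have "\<dots> = (\<Sum>j\<in>UNIV. (a v* M)$j * x$j)"
    by (simp add: vector_matrix_mult_def sum_distrib_right sum_distrib_left)
  finally show ?thesis .
qed

lemma refl_mult: "refl_mat M d *v x = x + bilin M d x *s d"
proof -
  have "refl_mat M d = mat 1 + (\<chi> i j. d$i * (d v* M)$j)"
    by (simp add: vec_eq_iff refl_mat_def mat_def)
  moreover have "(\<chi> i j. d$i * (d v* M)$j) *v x = bilin M d x *s d"
    by (simp add: vec_eq_iff matrix_vector_mult_def bilin_vm sum_distrib_left ac_simps)
  ultimately show ?thesis by (simp add: matrix_vector_mult_add_rdistrib)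
qed

lemma refl_bilin:
  assumes "transpose M = M" "bilin M d d = -2"
  shows "bilin M (refl_mat M d *v x) (refl_mat M d *v y) = bilin M x y"
  unfolding refl_mult bilin_add_left bilin_add_right bilin_scale_left bilin_scale_right
  using assms bilin_sym[OF assms(1), of x d] by (simp add: algebra_simps)

lemma mv_swap: "(\<Sum>a\<in>UNIV. (A *v x)$a * z$a) = (\<Sum>i\<in>UNIV. x$i * (transpose A *v z)$i :: 'a::comm_ring_1)"
proof -
  have "(\<Sum>a\<in>UNIV. (A *v x)$a * z$a) = (\<Sum>a\<in>UNIV. \<Sum>i\<in>UNIV. x$i * (A$a$i * z$a))"
    by (simp add: matrix_vector_mult_def sum_distrib_right sum_distrib_left) (intro sum.cong refl, simp add: ac_simps)
  also have "\<dots> = (\<Sum>i\<in>UNIV. \<Sum>a\<in>UNIV. x$i * (A$a$i * z$a))"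
    by (rule sum.swap)
  also have "\<dots> = (\<Sum>i\<in>UNIV. x$i * (transpose A *v z)$i)"
    by (simp add: matrix_vector_mult_def transpose_def sum_distrib_left)
  finally show ?thesis .
qed

lemma bilin_matrix: "bilin M (A *v x) (A *v y) = bilin (transpose A ** M ** A) x y"
  unfolding bilin_mv mv_swap matrix_vector_mul_assoc matrix_mul_assoc ..

lemma axis_sum: "(\<Sum>a\<in>UNIV. (axis i 1)$a * f a) = (f i :: 'a::comm_ring_1)"
proof -
  have "(axis i 1)$a * f a = (if a = i then f a else 0)" for a by (simp add: axis_def)
  then show ?thesis by simp
qed

lemma bilin_axis: "bilin M (axis i 1) (axis j 1) = M$i$j"
proof -
  have "bilin M (axis i 1) (axis j 1) = (M *v axis j 1)$i" unfolding bilin_mv axis_sum ..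
  also have "\<dots> = M$i$j" unfolding matrix_vector_mult_def
    by (simp add: mult.commute[of "M$i$_"] axis_sum)
  finally show ?thesis .
qed

lemma bilin_ext: assumes "\<And>x y. bilin A x y = bilin B x y" shows "A = B"
  using assms bilin_axis by (metis vec_eq_iff)

lemma refl_orth:
  assumes "transpose M = M" "bilin M d d = -2"
  shows "transpose (refl_mat M d) ** M ** refl_mat M d = M"
  by (rule bilin_ext) (metis bilin_matrix refl_bilin[OF assms])

lemma refl_det: "det (refl_mat M d) = 1 + bilin M d d"
proof -
  have "refl_mat M d = (\<chi> i. if i \<in> UNIV then axis i 1 + d$i *s (d v* M) else axis i 1)"
    by (simp add: vec_eq_iff refl_mat_def axis_def)
  moreover have "det ((\<chi> i. if i \<in> UNIV then axis i 1 + d$i *s (d v* M) else axis i 1)) = 1 + (\<Sum>i\<in>UNIV. d$i * (d v* M)$i)"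
    by (rule det_l1) simp
  ultimately show ?thesis by (simp add: bilin_vm mult.commute)
qed

lemma refl_invol:
  assumes "bilin M d d = -2"
  shows "refl_mat M d *v (refl_mat M d *v x) = x"
  unfolding refl_mult[of M d "x + _"] unfolding refl_mult bilin_add_right bilin_scale_right assms
  by (simp add: vec_eq_iff algebra_simps)

lemma cmat_refl: "cmat (refl_mat G d) = refl_mat (cmat G) (cvec d)"
  by (simp add: vec_eq_iff cmat_def cvec_def refl_mat_def vector_matrix_mult_def)

lemma qmat_refl: "qmat (refl_mat G d) = refl_mat (qmat G) (qvec d)"
  by (simp add: vec_eq_iff qmat_def qvec_def refl_mat_def vector_matrix_mult_def)

lemma bilin_cvec: "bilin (cmat G) (cvec a) (cvec b) = of_int (bilin G a b)"
  by (simp add: bilin_def cmat_def cvec_def)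

lemma cmat_sym: assumes "transpose G = G" shows "transpose (cmat G) = cmat G"
proof -
  have e: "G$j$i = G$i$j" for i j
  proof -
    have "transpose G $ i $ j = G $ i $ j" using assms by simp
    then show ?thesis by (simp add: transpose_def)
  qed
  show ?thesis by (simp add: vec_eq_iff transpose_def cmat_def e)
qed

lemma cconj_mv: "cconj (cmat g *v u) = cmat g *v cconj u"
  by (simp add: vec_eq_iff cconj_def cmat_def matrix_vector_mult_def)

lemma cont_mv: "continuous_on S (\<lambda>u. (A::complex^'n^'n) *v u)"
  unfolding matrix_vector_mult_def by (intro continuous_intros)

theorem corollary3p3:
  fixes G :: "int ^'n ^'n" and b :: nat and D :: "(complex ^'n) set"
    and k :: int and F :: "complex ^'n \<Rightarrow> complex"
  assumes "signature_2_b G b" and "b \<ge> 3"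
    and "D \<in> components (period_cone G)"
    and "modular_form G D (disc_kernel G D) (\<lambda>g. of_int (det g)) k F"
  shows "vanishes_on_heegner_m2 G D F"
  unfolding vanishes_on_heegner_m2_def
proof (intro allI impI ballI)
  fix \<delta> :: "int^'n" and w
  assume hd: "bilin G \<delta> \<delta> = -2" and wD: "w \<in> D" and hw: "bilin (cmat G) (cvec \<delta>) w = 0"
  have sym: "transpose G = G" using assms(1) by (simp add: signature_2_b_def)
  define g where "g = refl_mat G \<delta>"
  have csym: "transpose (cmat G) = cmat G" using sym by (rule cmat_sym)
  have cd: "bilin (cmat G) (cvec \<delta>) (cvec \<delta>) = -2" using hd by (simp add: bilin_cvec)
  define f where "f = (\<lambda>u. cmat g *v u)"
  have fref: "f u = refl_mat (cmat G) (cvec \<delta>) *v u" for u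
    by (simp add: f_def g_def cmat_refl)
  have fw: "f w = w" using hw by (simp add: fref refl_mult)
  have ff: "f (f u) = u" for u unfolding fref by (rule refl_invol[OF cd])
  have detg: "det g = -1" unfolding g_def refl_det hd by simp
  have orth: "g \<in> orth_group G"
    unfolding orth_group_def g_def using refl_orth[OF sym hd] detg g_def by simp
  have cone: "f u \<in> period_cone G" if "u \<in> period_cone G" for u
  proof -
    have "cconj (f u) = f (cconj u)" by (simp add: f_def cconj_mv)
    then show ?thesis using that
      by (simp add: period_cone_def fref refl_bilin[OF csym cd])
  qed
  have comp: "D \<noteq> {} \<and> D \<subseteq> period_cone G \<and> connected D \<and>
     (\<forall>E. E \<noteq> {} \<and> D \<subseteq> E \<and> E \<subseteq> period_cone G \<and> connected E \<longrightarrow> E = D)"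
    using assms(3) by (simp add: in_components_maximal)
  have cf: "connected (f ` D)"
    unfolding f_def by (rule connected_continuous_image[OF cont_mv]) (use comp in simp)
  have "connected (D \<union> f ` D)"
  proof (rule connected_Un)
    have "w \<in> f ` D" using wD fw by (metis image_eqI)
    then show "D \<inter> f ` D \<noteq> {}" using wD by blast
  qed (use comp cf in auto)
  moreover have "D \<union> f ` D \<subseteq> period_cone G" using comp cone by auto
  ultimately have "D \<union> f ` D = D" using comp by blast
  then have sub: "f ` D \<subseteq> D" by blast
  have fD: "f ` D = D"
  proof
    show "D \<subseteq> f ` D"
    proof
      fix u assume "u \<in> D"
      then have "f u \<in> D" using sub by blast
      then show "u \<in> f ` D" using ff[of u] by (metis image_eqI)
    qed
  qed (rule sub)
  have disc: "g \<in> disc_kernel G D"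
    unfolding disc_kernel_def orth_plus_def
  proof (intro CollectI conjI ballI)
    show "g \<in> orth_group G" by (rule orth)
    show "(\<lambda>w. cmat g *v w) ` D = D" using fD by (simp add: f_def)
  next
    fix x assume "x \<in> dual_lattice G"
    then obtain v where v: "qmat G *v x = qvec v" by (auto simp: dual_lattice_def)
    have "bilin (qmat G) (qvec \<delta>) x = of_int (\<Sum>i\<in>UNIV. \<delta>$i * v$i)"
      unfolding bilin_mv v by (simp add: qvec_def)
    then have "qmat g *v x - x = qvec ((\<Sum>i\<in>UNIV. \<delta>$i * v$i) *s \<delta>)"
      by (simp add: g_def qmat_refl refl_mult vec_eq_iff qvec_def)
    then show "\<exists>v. qmat g *v x - x = qvec v" by blast
  qed
  have "F (cmat g *v w) = of_int (det g) * F w"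
    using assms(4) disc wD by (simp add: modular_form_def)
  then have "F w = - F w" using fw detg by (simp add: f_def)
  then show "F w = 0" by simp
qed

end
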